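(* Assume the process is uniformly allowable with constant $\alpha>0$, and set $p_*=\alpha/2$. Let $\theta\in\mathcal I$, $k\in[N]$, $0<\tilde\delta<1$ and $\mathbf s\in[0,1]^N$. If there exists $i\in[N]$ with $\mathbf M_\theta(k,i)>0$ and $s_i<1-\tilde\delta$, then $f_\theta^{(k)}(\mathbf s)<1-p_*\tilde\delta$.
   Context: $N\ge2$, $\mathcal I$ a countable set, $[N]=\{0,\dots,N-1\}$. For each $\theta\in\mathcal I$ and $k\in[N]$, $f_\theta^{(k)}(\mathbf s)=\sum_{\mathbf z\in\mathbb N_0^N}f_\theta^{(k)}[\mathbf z]\mathbf s^{\mathbf z}$ ($\mathbf s^{\mathbf z}=\prod_j s_j^{z_j}$) is the pgf of a probability distribution on $\mathbb N_0^N$, and $\mathbf M_\theta(k,i)=\partial f_\theta^{(k)}/\partial s_i(\mathbf 1)$ (finite). Uniformly allowable with constant $\alpha$ means $\inf\{\sum_{\mathbf w\in\mathbb N_0^N:\,w_i\ne0}f_\theta^{(k)}[\mathbf w]:\theta\in\mathcal I,\ k,i\in[N],\ \mathbf M_\theta(k,i)>0\}>\alpha$. *)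

theory Defs
  imports "HOL-Analysis.Analysis"
begin

text \<open>Vectors in N_0^N are functions nat => nat vanishing outside [N] = {0..<N}.\<close>
definition vecs :: "nat \<Rightarrow> (nat \<Rightarrow> nat) set" where
  "vecs N = {z. \<forall>j. N \<le> j \<longrightarrow> z j = 0}"

definition prob_dist :: "nat \<Rightarrow> ((nat \<Rightarrow> nat) \<Rightarrow> real) \<Rightarrow> bool" where
  "prob_dist N p \<longleftrightarrow> (\<forall>z. 0 \<le> p z) \<and> (\<forall>z. z \<notin> vecs N \<longrightarrow> p z = 0)
     \<and> (p has_sum 1) (vecs N)"

definition pgf :: "nat \<Rightarrow> ((nat \<Rightarrow> nat) \<Rightarrow> real) \<Rightarrow> (nat \<Rightarrow> real) \<Rightarrow> real" where
  "pgf N p s = (\<Sum>\<^sub>\<infinity>z\<in>vecs N. p z * (\<Prod>j<N. s j ^ z j))"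

text \<open>Finiteness of all first partial derivatives at 1 (finite means).\<close>
definition finite_means :: "nat \<Rightarrow> ((nat \<Rightarrow> nat) \<Rightarrow> real) \<Rightarrow> bool" where
  "finite_means N p \<longleftrightarrow> (\<forall>i<N. (\<lambda>z. p z * real (z i)) summable_on vecs N)"

text \<open>M(k,i) = partial derivative of f^(k) w.r.t. s_i at 1 = sum_z f[z] z_i.\<close>
definition mean_mat :: "nat \<Rightarrow> ((nat \<Rightarrow> nat) \<Rightarrow> real) \<Rightarrow> nat \<Rightarrow> real" where
  "mean_mat N p i = (\<Sum>\<^sub>\<infinity>z\<in>vecs N. p z * real (z i))"

text \<open>Uniformly allowable with constant alpha; the infimum is taken in the extended
  reals so that the infimum of the empty set is +infinity.\<close>
definition uniformly_allowable ::
  "nat \<Rightarrow> 'i set \<Rightarrow> ('i \<Rightarrow> nat \<Rightarrow> (nat \<Rightarrow> nat) \<Rightarrow> real) \<Rightarrow> real \<Rightarrow> bool" where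
  "uniformly_allowable N I f \<alpha> \<longleftrightarrow>
     Inf {ereal (\<Sum>\<^sub>\<infinity>w\<in>{w\<in>vecs N. w i \<noteq> 0}. f \<theta> k w) | \<theta> k i.
            \<theta> \<in> I \<and> k < N \<and> i < N \<and> mean_mat N (f \<theta> k) i > 0} > ereal \<alpha>"

end

theory Submission
  imports Defs
begin

theorem lemma5p7:
  fixes N :: nat and I :: "'i set" and f :: "'i \<Rightarrow> nat \<Rightarrow> (nat \<Rightarrow> nat) \<Rightarrow> real"
    and \<alpha> \<delta> :: real and \<theta> :: 'i and k :: nat and s :: "nat \<Rightarrow> real"
  assumes "N \<ge> 2" and "countable I"
    and dist: "\<And>\<theta> k. \<theta> \<in> I \<Longrightarrow> k < N \<Longrightarrow> prob_dist N (f \<theta> k)"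
    and means: "\<And>\<theta> k. \<theta> \<in> I \<Longrightarrow> k < N \<Longrightarrow> finite_means N (f \<theta> k)"
    and "\<alpha> > 0" and "uniformly_allowable N I f \<alpha>"
    and "\<theta> \<in> I" and "k < N" and "0 < \<delta>" and "\<delta> < 1"
    and "\<forall>j<N. 0 \<le> s j \<and> s j \<le> 1"
    and "\<exists>i<N. mean_mat N (f \<theta> k) i > 0 \<and> s i < 1 - \<delta>"
  shows "pgf N (f \<theta> k) s < 1 - (\<alpha> / 2) * \<delta>"
proof -
  obtain i where i: "i < N" "mean_mat N (f \<theta> k) i > 0" "s i < 1 - \<delta>"
    using assms(12) by blast
  define p where "p = f \<theta> k"
  define V where "V = vecs N"
  define A where "A = {w\<in>vecs N. w i \<noteq> 0}"
  define g where "g = (\<lambda>z. p z * (\<Prod>j<N. s j ^ z j))"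
  have pd: "prob_dist N p" using dist assms(7,8) p_def by blast
  have pnn: "\<And>z. 0 \<le> p z" using pd unfolding prob_dist_def by blast
  have hs: "(p has_sum 1) V" using pd unfolding prob_dist_def V_def by blast
  have sumV: "p summable_on V" using hs has_sum_imp_summable by blast
  have inf1: "infsum p V = 1" using hs infsumI by blast
  have AV: "A \<subseteq> V" unfolding A_def V_def by blast
  have sumA: "p summable_on A" by (rule summable_on_subset_banach[OF sumV AV])
  have sumB: "p summable_on (V - A)" by (rule summable_on_subset_banach[OF sumV]) blast
  have split: "infsum p A + infsum p (V - A) = 1"
  proof -
    have "V = A \<union> (V - A)" using AV by blast
    then have "infsum p V = infsum p A + infsum p (V - A)"
      using infsum_Un_disjoint[OF sumA sumB] by (metis Diff_disjoint)
    then show ?thesis using inf1 by simp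
  qed
  have PA: "infsum p A > \<alpha>"
  proof -
    let ?S = "{ereal (\<Sum>\<^sub>\<infinity>w\<in>{w\<in>vecs N. w i \<noteq> 0}. f \<theta> k w) | \<theta> k i.
            \<theta> \<in> I \<and> k < N \<and> i < N \<and> mean_mat N (f \<theta> k) i > 0}"
    have mem: "ereal (infsum p A) \<in> ?S" unfolding p_def A_def using i assms(7,8) by blast
    have "Inf ?S > ereal \<alpha>" using assms(6) unfolding uniformly_allowable_def by simp
    moreover have "Inf ?S \<le> ereal (infsum p A)" using mem by (rule Inf_lower)
    ultimately have "ereal \<alpha> < ereal (infsum p A)" by (rule less_le_trans)
    then show ?thesis by simp
  qed
  have prodb: "0 \<le> (\<Prod>j<N. s j ^ z j) \<and> (\<Prod>j<N. s j ^ z j) \<le> 1" for z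
    using assms(11) by (auto intro!: prod_nonneg prod_le_1 power_le_one)
  have gnn: "\<And>z. 0 \<le> g z" unfolding g_def using pnn prodb by (simp add: mult_nonneg_nonneg)
  have gle: "\<And>z. g z \<le> p z" unfolding g_def using pnn prodb
    by (metis mult_left_le)
  have gA: "g z \<le> (1 - \<delta>) * p z" if "z \<in> A" for z
  proof -
    have zi: "z i \<noteq> 0" using that A_def by simp
    have "(\<Prod>j<N. s j ^ z j) = s i ^ z i * (\<Prod>j\<in>{..<N} - {i}. s j ^ z j)"
      using i(1) by (simp add: prod.remove)
    also have "\<dots> \<le> s i ^ z i"
    proof -
      have "(\<Prod>j\<in>{..<N} - {i}. s j ^ z j) \<le> 1" using assms(11) by (auto intro!: prod_le_1 power_le_one)
      moreover have "0 \<le> s i ^ z i" using assms(11) i(1) by simp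
      ultimately show ?thesis by (simp add: mult_left_le)
    qed
    also have "\<dots> \<le> s i ^ 1"
      using assms(11) i(1) zi by (intro power_decreasing) auto
    also have "\<dots> \<le> 1 - \<delta>" using i(3) by simp
    finally have "(\<Prod>j<N. s j ^ z j) \<le> 1 - \<delta>" .
    then show ?thesis unfolding g_def using pnn[of z]
      by (metis mult.commute mult_left_mono)
  qed
  have gsA: "g summable_on A" by (rule summable_on_comparison_test[OF sumA gle gnn])
  have gsB: "g summable_on (V - A)" by (rule summable_on_comparison_test[OF sumB gle gnn])
  have "pgf N p s = infsum g V" unfolding pgf_def g_def V_def by simp
  also have "\<dots> = infsum g A + infsum g (V - A)"
  proof -
    have "V = A \<union> (V - A)" using AV by blast
    then show ?thesis using infsum_Un_disjoint[OF gsA gsB] by (metis Diff_disjoint)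
  qed
  also have "\<dots> \<le> (1 - \<delta>) * infsum p A + infsum p (V - A)"
  proof -
    have "infsum g A \<le> infsum (\<lambda>z. (1 - \<delta>) * p z) A"
      using gsA sumA gA by (intro infsum_mono) (auto intro: summable_on_cmult_right)
    also have "\<dots> = (1 - \<delta>) * infsum p A" by (rule infsum_cmult_right')
    finally have "infsum g A \<le> (1 - \<delta>) * infsum p A" .
    moreover have "infsum g (V - A) \<le> infsum p (V - A)"
      using gsB sumB gle by (intro infsum_mono) auto
    ultimately show ?thesis by linarith
  qed
  also have "\<dots> = 1 - \<delta> * infsum p A" using split by (simp add: algebra_simps)
  also have "\<dots> < 1 - (\<alpha> / 2) * \<delta>"
  proof -
    have "\<delta> * \<alpha> < \<delta> * infsum p A" using PA assms(9) by simp
    then show ?thesis using assms(5,9) by (simp add: algebra_simps)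
  qed
  finally show ?thesis unfolding p_def .
qed

end
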